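(* Let $R$ be a simplicial ring. For $M_+$ a finitely generated projective simplicial $R[t]$-module, multiplication by $t^i$ ($i\geq0$) induces an equivalence $M_+[p]\simeq M_+[p+i]$ for each $p\geq 0$. Likewise, for $M_-$ a finitely generated projective simplicial $R[t^{-1}]$-module, multiplication by $t^{-i}$ induces an equivalence $M_-[p]\simeq M_-[p-i]$ for each $p\leq 0$.
   Context: $R$ is an associative unital simplicial ring. For an $R[t]$-module $M_+$ and $p\geq0$, $M_+[p]:=t^pM_+/t^{p+1}M_+$. For an $R[t^{-1}]$-module $M_-$ and $p\leq0$, $M_-[p]:=t^{p}M_-/t^{p-1}M_-$. These are regarded as $R$-modules. *)

theory Defs
  imports "HOL-Algebra.UnivPoly" "HOL-Algebra.AbelCoset"
begin

definition simplicial_ops ::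
  "(nat \<Rightarrow> 'a set) \<Rightarrow> (nat \<Rightarrow> nat \<Rightarrow> 'a \<Rightarrow> 'a) \<Rightarrow> (nat \<Rightarrow> nat \<Rightarrow> 'a \<Rightarrow> 'a) \<Rightarrow> bool" where
  "simplicial_ops X d s \<longleftrightarrow>
     (\<forall>n i x. i \<le> Suc n \<and> x \<in> X (Suc n) \<longrightarrow> d n i x \<in> X n) \<and>
     (\<forall>n i x. i \<le> n \<and> x \<in> X n \<longrightarrow> s n i x \<in> X (Suc n)) \<and>
     \<comment> \<open>d_i d_j = d_{j-1} d_i for i < j\<close>
     (\<forall>n i j x. i < j \<and> j \<le> Suc (Suc n) \<and> x \<in> X (Suc (Suc n)) \<longrightarrow>
        d n i (d (Suc n) j x) = d n (j - 1) (d (Suc n) i x)) \<and>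
     \<comment> \<open>d_i s_j = s_{j-1} d_i for i < j\<close>
     (\<forall>n i j x. i < j \<and> j \<le> Suc n \<and> x \<in> X (Suc n) \<longrightarrow>
        d (Suc n) i (s (Suc n) j x) = s n (j - 1) (d n i x)) \<and>
     \<comment> \<open>d_j s_j = id = d_{j+1} s_j\<close>
     (\<forall>n j x. j \<le> n \<and> x \<in> X n \<longrightarrow> d n j (s n j x) = x \<and> d n (Suc j) (s n j x) = x) \<and>
     \<comment> \<open>d_i s_j = s_j d_{i-1} for i > j+1\<close>
     (\<forall>n i j x. Suc j < i \<and> i \<le> Suc (Suc n) \<and> x \<in> X (Suc n) \<longrightarrow>
        d (Suc n) i (s (Suc n) j x) = s n j (d n (i - 1) x)) \<and>
     \<comment> \<open>s_i s_j = s_{j+1} s_i for i \<le> j\<close>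
     (\<forall>n i j x. i \<le> j \<and> j \<le> n \<and> x \<in> X n \<longrightarrow>
        s (Suc n) i (s n j x) = s (Suc n) (Suc j) (s n i x))"

definition simplicial_ring ::
  "(nat \<Rightarrow> ('r, 'x) ring_scheme) \<Rightarrow> (nat \<Rightarrow> nat \<Rightarrow> 'r \<Rightarrow> 'r) \<Rightarrow> (nat \<Rightarrow> nat \<Rightarrow> 'r \<Rightarrow> 'r) \<Rightarrow> bool" where
  "simplicial_ring R d s \<longleftrightarrow>
     (\<forall>n. ring (R n)) \<and> simplicial_ops (\<lambda>n. carrier (R n)) d s \<and>
     (\<forall>n i. i \<le> Suc n \<longrightarrow> d n i \<in> ring_hom (R (Suc n)) (R n)) \<and>
     (\<forall>n i. i \<le> n \<longrightarrow> s n i \<in> ring_hom (R n) (R (Suc n)))"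

definition left_module :: "('s, 'x) ring_scheme \<Rightarrow> ('s, 'm, 'y) module_scheme \<Rightarrow> bool" where
  "left_module A M \<longleftrightarrow> ring A \<and> abelian_group M \<and>
     (\<forall>a \<in> carrier A. \<forall>x \<in> carrier M. smult M a x \<in> carrier M) \<and>
     (\<forall>a \<in> carrier A. \<forall>b \<in> carrier A. \<forall>x \<in> carrier M.
        smult M (a \<oplus>\<^bsub>A\<^esub> b) x = smult M a x \<oplus>\<^bsub>M\<^esub> smult M b x) \<and>
     (\<forall>a \<in> carrier A. \<forall>x \<in> carrier M. \<forall>y \<in> carrier M.
        smult M a (x \<oplus>\<^bsub>M\<^esub> y) = smult M a x \<oplus>\<^bsub>M\<^esub> smult M a y) \<and>
     (\<forall>a \<in> carrier A. \<forall>b \<in> carrier A. \<forall>x \<in> carrier M.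
        smult M (a \<otimes>\<^bsub>A\<^esub> b) x = smult M a (smult M b x)) \<and>
     (\<forall>x \<in> carrier M. smult M \<one>\<^bsub>A\<^esub> x = x)"

definition simplicial_module ::
  "(nat \<Rightarrow> ('s, 'x) ring_scheme) \<Rightarrow> (nat \<Rightarrow> nat \<Rightarrow> 's \<Rightarrow> 's) \<Rightarrow> (nat \<Rightarrow> nat \<Rightarrow> 's \<Rightarrow> 's) \<Rightarrow>
   (nat \<Rightarrow> ('s, 'm) module) \<Rightarrow> (nat \<Rightarrow> nat \<Rightarrow> 'm \<Rightarrow> 'm) \<Rightarrow> (nat \<Rightarrow> nat \<Rightarrow> 'm \<Rightarrow> 'm) \<Rightarrow> bool" where
  "simplicial_module A dA sA M d s \<longleftrightarrow>
     (\<forall>n. left_module (A n) (M n)) \<and> simplicial_ops (\<lambda>n. carrier (M n)) d s \<and>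
     (\<forall>n i. i \<le> Suc n \<longrightarrow>
        (\<forall>x \<in> carrier (M (Suc n)). \<forall>y \<in> carrier (M (Suc n)).
           d n i (x \<oplus>\<^bsub>M (Suc n)\<^esub> y) = d n i x \<oplus>\<^bsub>M n\<^esub> d n i y) \<and>
        (\<forall>a \<in> carrier (A (Suc n)). \<forall>x \<in> carrier (M (Suc n)).
           d n i (smult (M (Suc n)) a x) = smult (M n) (dA n i a) (d n i x))) \<and>
     (\<forall>n i. i \<le> n \<longrightarrow>
        (\<forall>x \<in> carrier (M n). \<forall>y \<in> carrier (M n).
           s n i (x \<oplus>\<^bsub>M n\<^esub> y) = s n i x \<oplus>\<^bsub>M (Suc n)\<^esub> s n i y) \<and>
        (\<forall>a \<in> carrier (A n). \<forall>x \<in> carrier (M n).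
           s n i (smult (M n) a x) = smult (M (Suc n)) (sA n i a) (s n i x)))"

definition pmap :: "('a \<Rightarrow> 'b) \<Rightarrow> (nat \<Rightarrow> 'a) \<Rightarrow> (nat \<Rightarrow> 'b)" where
  "pmap f p = (\<lambda>k. f (p k))"

definition simplicial_poly_module ::
  "(nat \<Rightarrow> ('r, 'x) ring_scheme) \<Rightarrow> (nat \<Rightarrow> nat \<Rightarrow> 'r \<Rightarrow> 'r) \<Rightarrow> (nat \<Rightarrow> nat \<Rightarrow> 'r \<Rightarrow> 'r) \<Rightarrow>
   (nat \<Rightarrow> (nat \<Rightarrow> 'r, 'm) module) \<Rightarrow> (nat \<Rightarrow> nat \<Rightarrow> 'm \<Rightarrow> 'm) \<Rightarrow> (nat \<Rightarrow> nat \<Rightarrow> 'm \<Rightarrow> 'm) \<Rightarrow> bool" where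
  "simplicial_poly_module R dR sR M d s \<longleftrightarrow>
     simplicial_module (\<lambda>n. UP (R n)) (\<lambda>n i. pmap (dR n i)) (\<lambda>n i. pmap (sR n i)) M d s"

text \<open>Finitely generated projective module: a retract of a finite free module A^k.
  A linear map A^k \<rightarrow> M is (a_j)_j \<mapsto> \<Sum>_j a_j m_j for generators m_j; a linear map
  M \<rightarrow> A^k is a k-tuple of A-linear forms \<sigma>_j; the retraction condition says the
  composite M \<rightarrow> A^k \<rightarrow> M is the identity.\<close>

definition fg_projective :: "('s, 'x) ring_scheme \<Rightarrow> ('s, 'm) module \<Rightarrow> bool" where
  "fg_projective A M \<longleftrightarrow> left_module A M \<and>
     (\<exists>(k::nat) (m :: nat \<Rightarrow> 'm) (\<sigma> :: nat \<Rightarrow> 'm \<Rightarrow> 's).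
        (\<forall>j<k. m j \<in> carrier M) \<and>
        (\<forall>j<k. \<forall>x \<in> carrier M. \<sigma> j x \<in> carrier A) \<and>
        (\<forall>j<k. \<forall>x \<in> carrier M. \<forall>y \<in> carrier M. \<sigma> j (x \<oplus>\<^bsub>M\<^esub> y) = \<sigma> j x \<oplus>\<^bsub>A\<^esub> \<sigma> j y) \<and>
        (\<forall>j<k. \<forall>a \<in> carrier A. \<forall>x \<in> carrier M. \<sigma> j (smult M a x) = a \<otimes>\<^bsub>A\<^esub> \<sigma> j x) \<and>
        (\<forall>x \<in> carrier M. finsum M (\<lambda>j. smult M (\<sigma> j x) (m j)) {..<k} = x))"

text \<open>Normalized (Moore) complex: N_0 = G_0, N_{n+1} = \<Inter>_{1\<le>i\<le>n+1} ker d_i,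
  differential d_0. \<pi>_n = Z_n / B_n.\<close>

definition moore_N :: "(nat \<Rightarrow> ('g, 'x) monoid_scheme) \<Rightarrow> (nat \<Rightarrow> nat \<Rightarrow> 'g \<Rightarrow> 'g) \<Rightarrow> nat \<Rightarrow> 'g set" where
  "moore_N G d n = (case n of 0 \<Rightarrow> carrier (G 0)
     | Suc m \<Rightarrow> {x \<in> carrier (G (Suc m)). \<forall>i. 1 \<le> i \<and> i \<le> Suc m \<longrightarrow> d m i x = \<one>\<^bsub>G m\<^esub>})"

definition moore_Z :: "(nat \<Rightarrow> ('g, 'x) monoid_scheme) \<Rightarrow> (nat \<Rightarrow> nat \<Rightarrow> 'g \<Rightarrow> 'g) \<Rightarrow> nat \<Rightarrow> 'g set" where
  "moore_Z G d n = (case n of 0 \<Rightarrow> moore_N G d 0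
     | Suc m \<Rightarrow> {x \<in> moore_N G d (Suc m). d m 0 x = \<one>\<^bsub>G m\<^esub>})"

definition moore_B :: "(nat \<Rightarrow> ('g, 'x) monoid_scheme) \<Rightarrow> (nat \<Rightarrow> nat \<Rightarrow> 'g \<Rightarrow> 'g) \<Rightarrow> nat \<Rightarrow> 'g set" where
  "moore_B G d n = d n 0 ` moore_N G d (Suc n)"

text \<open>A simplicial homomorphism f : G \<rightarrow> H (levelwise group homomorphisms commuting with
  faces and degeneracies) is a weak equivalence if it induces bijections
  \<pi>_n G \<rightarrow> \<pi>_n H for all n.\<close>

definition weak_equivalence ::
  "(nat \<Rightarrow> ('g, 'x) monoid_scheme) \<Rightarrow> (nat \<Rightarrow> nat \<Rightarrow> 'g \<Rightarrow> 'g) \<Rightarrow> (nat \<Rightarrow> nat \<Rightarrow> 'g \<Rightarrow> 'g) \<Rightarrow>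
   (nat \<Rightarrow> ('h, 'y) monoid_scheme) \<Rightarrow> (nat \<Rightarrow> nat \<Rightarrow> 'h \<Rightarrow> 'h) \<Rightarrow> (nat \<Rightarrow> nat \<Rightarrow> 'h \<Rightarrow> 'h) \<Rightarrow>
   (nat \<Rightarrow> 'g \<Rightarrow> 'h) \<Rightarrow> bool" where
  "weak_equivalence G dG sG H dH sH f \<longleftrightarrow>
     (\<forall>n. f n \<in> hom (G n) (H n)) \<and>
     (\<forall>n i x. i \<le> Suc n \<and> x \<in> carrier (G (Suc n)) \<longrightarrow> f n (dG n i x) = dH n i (f (Suc n) x)) \<and>
     (\<forall>n i x. i \<le> n \<and> x \<in> carrier (G n) \<longrightarrow> f (Suc n) (sG n i x) = sH n i (f n x)) \<and>
     (\<forall>n. \<forall>z \<in> moore_Z H dH n. \<exists>w \<in> moore_Z G dG n. \<exists>b \<in> moore_B H dH n.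
          z = f n w \<otimes>\<^bsub>H n\<^esub> b) \<and>
     (\<forall>n. \<forall>w \<in> moore_Z G dG n. f n w \<in> moore_B H dH n \<longrightarrow> w \<in> moore_B G dG n)"


definition tpow_sub :: "('r, 'x) ring_scheme \<Rightarrow> (nat \<Rightarrow> 'r, 'm) module \<Rightarrow> nat \<Rightarrow> 'm set" where
  "tpow_sub R M p = {smult M (monom (UP R) \<one>\<^bsub>R\<^esub> p) x | x. x \<in> carrier M}"

text \<open>Levels of t^p M / t^{p+1} M, as the factor group of the additive group of
  t^p M_n by t^{p+1} M_n.\<close>

definition grade_level ::
  "(nat \<Rightarrow> ('r, 'x) ring_scheme) \<Rightarrow> (nat \<Rightarrow> (nat \<Rightarrow> 'r, 'm) module) \<Rightarrow> nat \<Rightarrow> nat \<Rightarrow> 'm set monoid" where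
  "grade_level R M p n =
     FactGroup ((add_monoid (M n))\<lparr>carrier := tpow_sub (R n) (M n) p\<rparr>) (tpow_sub (R n) (M n) (Suc p))"

text \<open>Induced structure maps on cosets (via any representative).\<close>

definition grade_face ::
  "(nat \<Rightarrow> ('r, 'x) ring_scheme) \<Rightarrow> (nat \<Rightarrow> (nat \<Rightarrow> 'r, 'm) module) \<Rightarrow> (nat \<Rightarrow> nat \<Rightarrow> 'm \<Rightarrow> 'm) \<Rightarrow>
   nat \<Rightarrow> nat \<Rightarrow> nat \<Rightarrow> 'm set \<Rightarrow> 'm set" where
  "grade_face R M d p n i C = tpow_sub (R n) (M n) (Suc p) +>\<^bsub>M n\<^esub> d n i (SOME x. x \<in> C)"

definition grade_degen ::
  "(nat \<Rightarrow> ('r, 'x) ring_scheme) \<Rightarrow> (nat \<Rightarrow> (nat \<Rightarrow> 'r, 'm) module) \<Rightarrow> (nat \<Rightarrow> nat \<Rightarrow> 'm \<Rightarrow> 'm) \<Rightarrow>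
   nat \<Rightarrow> nat \<Rightarrow> nat \<Rightarrow> 'm set \<Rightarrow> 'm set" where
  "grade_degen R M s p n i C = tpow_sub (R (Suc n)) (M (Suc n)) (Suc p) +>\<^bsub>M (Suc n)\<^esub> s n i (SOME x. x \<in> C)"

definition grade_mult ::
  "(nat \<Rightarrow> ('r, 'x) ring_scheme) \<Rightarrow> (nat \<Rightarrow> (nat \<Rightarrow> 'r, 'm) module) \<Rightarrow> nat \<Rightarrow> nat \<Rightarrow> nat \<Rightarrow> 'm set \<Rightarrow> 'm set" where
  "grade_mult R M p i n C = tpow_sub (R n) (M n) (Suc (p + i)) +>\<^bsub>M n\<^esub>
       smult (M n) (monom (UP (R n)) \<one>\<^bsub>R n\<^esub> i) (SOME x. x \<in> C)"

definition mult_equiv_pos ::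
  "(nat \<Rightarrow> ('r, 'x) ring_scheme) \<Rightarrow> (nat \<Rightarrow> (nat \<Rightarrow> 'r, 'm) module) \<Rightarrow>
   (nat \<Rightarrow> nat \<Rightarrow> 'm \<Rightarrow> 'm) \<Rightarrow> (nat \<Rightarrow> nat \<Rightarrow> 'm \<Rightarrow> 'm) \<Rightarrow> nat \<Rightarrow> nat \<Rightarrow> bool" where
  "mult_equiv_pos R M d s p i \<longleftrightarrow>
     weak_equivalence
       (grade_level R M p) (grade_face R M d p) (grade_degen R M s p)
       (grade_level R M (p + i)) (grade_face R M d (p + i)) (grade_degen R M s (p + i))
       (grade_mult R M p i)"

text \<open>For an R[t^{-1}]-module M_- (polynomial variable u = t^{-1}) and p \<le> 0,
  M_-[p] = t^p M_- / t^{p-1} M_- = u^{-p} M_- / u^{-p+1} M_-; multiplication by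
  t^{-i} = u^i maps M_-[p] to M_-[p-i].\<close>

definition grade_level_neg ::
  "(nat \<Rightarrow> ('r, 'x) ring_scheme) \<Rightarrow> (nat \<Rightarrow> (nat \<Rightarrow> 'r, 'm) module) \<Rightarrow> int \<Rightarrow> nat \<Rightarrow> 'm set monoid" where
  "grade_level_neg R M p = grade_level R M (nat (- p))"

definition mult_equiv_neg ::
  "(nat \<Rightarrow> ('r, 'x) ring_scheme) \<Rightarrow> (nat \<Rightarrow> (nat \<Rightarrow> 'r, 'm) module) \<Rightarrow>
   (nat \<Rightarrow> nat \<Rightarrow> 'm \<Rightarrow> 'm) \<Rightarrow> (nat \<Rightarrow> nat \<Rightarrow> 'm \<Rightarrow> 'm) \<Rightarrow> int \<Rightarrow> nat \<Rightarrow> bool" where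
  "mult_equiv_neg R M d s p i \<longleftrightarrow>
     weak_equivalence
       (grade_level_neg R M p) (grade_face R M d (nat (- p))) (grade_degen R M s (nat (- p)))
       (grade_level_neg R M (p - int i)) (grade_face R M d (nat (- (p - int i))))
         (grade_degen R M s (nat (- (p - int i))))
       (grade_mult R M (nat (- p)) i)"

end

theory Submission
  imports Defs
begin


lemma weq_abstract:
  fixes G :: "nat \<Rightarrow> ('g,'x) monoid_scheme" and H :: "nat \<Rightarrow> ('h,'y) monoid_scheme"
  assumes hom: "\<And>n. f n \<in> hom (G n) (H n)"
    and bij: "\<And>n. bij_betw (f n) (carrier (G n)) (carrier (H n))"
    and oneG: "\<And>n. \<one>\<^bsub>G n\<^esub> \<in> carrier (G n)"
    and fone: "\<And>n. f n \<one>\<^bsub>G n\<^esub> = \<one>\<^bsub>H n\<^esub>"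
    and dGc: "\<And>n i x. i \<le> Suc n \<Longrightarrow> x \<in> carrier (G (Suc n)) \<Longrightarrow> dG n i x \<in> carrier (G n)"
    and dHone: "\<And>n i. i \<le> Suc n \<Longrightarrow> dH n i \<one>\<^bsub>H (Suc n)\<^esub> = \<one>\<^bsub>H n\<^esub>"
    and rone: "\<And>n x. x \<in> carrier (H n) \<Longrightarrow> x \<otimes>\<^bsub>H n\<^esub> \<one>\<^bsub>H n\<^esub> = x"
    and comd: "\<And>n i x. i \<le> Suc n \<Longrightarrow> x \<in> carrier (G (Suc n)) \<Longrightarrow> f n (dG n i x) = dH n i (f (Suc n) x)"
    and coms: "\<And>n i x. i \<le> n \<Longrightarrow> x \<in> carrier (G n) \<Longrightarrow> f (Suc n) (sG n i x) = sH n i (f n x)"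
  shows "weak_equivalence G dG sG H dH sH f"
proof -
  have inj: "\<And>n x y. x \<in> carrier (G n) \<Longrightarrow> y \<in> carrier (G n) \<Longrightarrow> f n x = f n y \<Longrightarrow> x = y"
    using bij by (meson bij_betw_def inj_onD)
  have surj: "\<And>n z. z \<in> carrier (H n) \<Longrightarrow> \<exists>w\<in>carrier (G n). z = f n w"
    using bij by (metis bij_betw_def imageE)
  have fc: "\<And>n x. x \<in> carrier (G n) \<Longrightarrow> f n x \<in> carrier (H n)"
    using bij by (meson bij_betwE)
  have oneH: "\<And>n. \<one>\<^bsub>H n\<^esub> \<in> carrier (H n)" using fc oneG fone by metis
  have kerd: "\<And>m i w. i \<le> Suc m \<Longrightarrow> w \<in> carrier (G (Suc m)) \<Longrightarrow> dH m i (f (Suc m) w) = \<one>\<^bsub>H m\<^esub> \<Longrightarrow> dG m i w = \<one>\<^bsub>G m\<^esub>"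
    using inj dGc oneG comd fone by metis
  have P1: "\<forall>n. \<forall>z \<in> moore_Z H dH n. \<exists>w \<in> moore_Z G dG n. \<exists>b \<in> moore_B H dH n.
          z = f n w \<otimes>\<^bsub>H n\<^esub> b"
  proof (intro allI ballI)
    fix n z assume z: "z \<in> moore_Z H dH n"
    have zc: "z \<in> carrier (H n)" using z by (cases n) (auto simp: moore_Z_def moore_N_def)
    obtain w where w: "w \<in> carrier (G n)" "z = f n w" using surj[OF zc] by blast
    have wZ: "w \<in> moore_Z G dG n"
    proof (cases n)
      case 0 thus ?thesis using w by (simp add: moore_Z_def moore_N_def)
    next
      case (Suc m)
      thus ?thesis using w z kerd by (auto simp: moore_Z_def moore_N_def)
    qed
    have bB: "\<one>\<^bsub>H n\<^esub> \<in> moore_B H dH n"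
      unfolding moore_B_def
      by (rule image_eqI[where x="\<one>\<^bsub>H (Suc n)\<^esub>"]) (auto simp: dHone moore_N_def oneH)
    show "\<exists>w \<in> moore_Z G dG n. \<exists>b \<in> moore_B H dH n. z = f n w \<otimes>\<^bsub>H n\<^esub> b"
      using wZ bB w zc rone by metis
  qed
  have P2: "\<forall>n. \<forall>w \<in> moore_Z G dG n. f n w \<in> moore_B H dH n \<longrightarrow> w \<in> moore_B G dG n"
  proof (intro allI ballI impI)
    fix n w assume wZ: "w \<in> moore_Z G dG n" and fw: "f n w \<in> moore_B H dH n"
    have wc: "w \<in> carrier (G n)" using wZ by (cases n) (auto simp: moore_Z_def moore_N_def)
    obtain y where y: "y \<in> moore_N H dH (Suc n)" "f n w = dH n 0 y" using fw by (auto simp: moore_B_def)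
    have yc: "y \<in> carrier (H (Suc n))" using y by (auto simp: moore_N_def)
    obtain y' where y': "y' \<in> carrier (G (Suc n))" "y = f (Suc n) y'" using surj[OF yc] by blast
    have "y' \<in> moore_N G dG (Suc n)" using y y' kerd by (auto simp: moore_N_def)
    moreover have "dG n 0 y' = w" using inj[OF dGc[of 0 n y'] wc] y y' comd by simp
    ultimately show "w \<in> moore_B G dG n" by (auto simp: moore_B_def)
  qed
  show ?thesis unfolding weak_equivalence_def using hom comd coms P1 P2 by blast
qed



lemma ag_cancel:
  assumes "abelian_group M" "s \<in> carrier M" "s \<oplus>\<^bsub>M\<^esub> s = s"
  shows "s = \<zero>\<^bsub>M\<^esub>"
  by (metis abelian_groupE(3,5,6) assms(1,2,3))

lemma ag_neg:
  assumes "abelian_group M" "s \<in> carrier M" "u \<in> carrier M" "s \<oplus>\<^bsub>M\<^esub> u = \<zero>\<^bsub>M\<^esub>"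
  shows "u = \<ominus>\<^bsub>M\<^esub> s"
  by (metis abelian_group.minus_equality abelian_groupE(4) assms(1,2,3,4))

locale tmod =
  fixes R :: "('r,'x) ring_scheme" and M :: "(nat \<Rightarrow> 'r, 'm) module"
  assumes R_ring: "ring R" and LM: "left_module (UP R) M"
begin

lemma UPR: "UP_ring R" using R_ring by (simp add: UP_ring_def)

lemma MG: "abelian_group M" using LM by (simp add: left_module_def)

lemma zeroM: "\<zero>\<^bsub>M\<^esub> \<in> carrier M" by (metis MG abelian_group.axioms(1) abelian_monoid.zero_closed)

abbreviation tm :: "nat \<Rightarrow> nat \<Rightarrow> 'r" where "tm k \<equiv> monom (UP R) \<one>\<^bsub>R\<^esub> k"

lemma tc: "tm k \<in> carrier (UP R)"
  using UP_ring.monom_closed[OF UPR] ring.ring_simprules(6)[OF R_ring] by blast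

lemma tt: "tm a \<otimes>\<^bsub>UP R\<^esub> tm b = tm (a + b)"
  using UP_ring.monom_mult[OF UPR, of "\<one>\<^bsub>R\<^esub>" "\<one>\<^bsub>R\<^esub>" a b] ring.ring_simprules(6,12)[OF R_ring]
  by simp

lemma sm_closed: "a \<in> carrier (UP R) \<Longrightarrow> x \<in> carrier M \<Longrightarrow> smult M a x \<in> carrier M"
  using LM by (simp add: left_module_def)

lemma sm_add: "a \<in> carrier (UP R) \<Longrightarrow> x \<in> carrier M \<Longrightarrow> y \<in> carrier M \<Longrightarrow>
   smult M a (x \<oplus>\<^bsub>M\<^esub> y) = smult M a x \<oplus>\<^bsub>M\<^esub> smult M a y"
  using LM by (simp add: left_module_def)

lemma stt: "x \<in> carrier M \<Longrightarrow> smult M (tm a) (smult M (tm b) x) = smult M (tm (a + b)) x"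
proof -
  assume x: "x \<in> carrier M"
  have "smult M (tm a \<otimes>\<^bsub>UP R\<^esub> tm b) x = smult M (tm a) (smult M (tm b) x)"
  proof -
    have ax: "\<forall>a \<in> carrier (UP R). \<forall>b \<in> carrier (UP R). \<forall>x \<in> carrier M.
        smult M (a \<otimes>\<^bsub>UP R\<^esub> b) x = smult M a (smult M b x)" using LM by (simp add: left_module_def)
    show ?thesis using ax tc[of a] tc[of b] x by blast
  qed
  thus ?thesis using tt by simp
qed

lemma sm_zero: "a \<in> carrier (UP R) \<Longrightarrow> smult M a \<zero>\<^bsub>M\<^esub> = \<zero>\<^bsub>M\<^esub>"
proof -
  assume a: "a \<in> carrier (UP R)"
  have z: "\<zero>\<^bsub>M\<^esub> \<in> carrier M" by (rule zeroM)
  have "smult M a \<zero>\<^bsub>M\<^esub> = smult M a (\<zero>\<^bsub>M\<^esub> \<oplus>\<^bsub>M\<^esub> \<zero>\<^bsub>M\<^esub>)"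
    using MG z by (simp add: abelian_group.axioms(1) abelian_monoid.l_zero)
  also have "\<dots> = smult M a \<zero>\<^bsub>M\<^esub> \<oplus>\<^bsub>M\<^esub> smult M a \<zero>\<^bsub>M\<^esub>" using sm_add a z by simp
  finally show ?thesis using ag_cancel[OF MG] sm_closed[OF a z] by metis
qed

lemma sm_neg: "a \<in> carrier (UP R) \<Longrightarrow> x \<in> carrier M \<Longrightarrow> smult M a (\<ominus>\<^bsub>M\<^esub> x) = \<ominus>\<^bsub>M\<^esub> smult M a x"
proof -
  assume a: "a \<in> carrier (UP R)" and x: "x \<in> carrier M"
  have nx: "\<ominus>\<^bsub>M\<^esub> x \<in> carrier M" using MG x by (simp add: abelian_group.a_inv_closed)
  have "smult M a x \<oplus>\<^bsub>M\<^esub> smult M a (\<ominus>\<^bsub>M\<^esub> x) = smult M a (x \<oplus>\<^bsub>M\<^esub> \<ominus>\<^bsub>M\<^esub> x)"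
    using sm_add a x nx by simp
  also have "\<dots> = \<zero>\<^bsub>M\<^esub>" using MG x sm_zero a by (simp add: abelian_group.r_neg)
  finally show ?thesis using ag_neg[OF MG] sm_closed a x nx by metis
qed

abbreviation T where "T k \<equiv> tpow_sub R M k"

lemma T_carrier: "T k \<subseteq> carrier M"
  using sm_closed tc by (auto simp: tpow_sub_def)


lemma T_zero: "\<zero>\<^bsub>M\<^esub> \<in> T k"
  unfolding tpow_sub_def mem_Collect_eq
  by (rule exI[of _ "\<zero>\<^bsub>M\<^esub>"]) (simp add: sm_zero[OF tc] zeroM)

lemma T_sub: "subgroup (T k) (add_monoid M)"
proof (rule subgroup.intro)
  show "T k \<subseteq> carrier (add_monoid M)" using T_carrier by simp
  show "\<And>x y. x \<in> T k \<Longrightarrow> y \<in> T k \<Longrightarrow> x \<otimes>\<^bsub>add_monoid M\<^esub> y \<in> T k"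
  proof -
    fix x y assume "x \<in> T k" "y \<in> T k"
    then obtain a b where ab: "a \<in> carrier M" "b \<in> carrier M" "x = smult M (tm k) a" "y = smult M (tm k) b"
      by (auto simp: tpow_sub_def)
    have "x \<otimes>\<^bsub>add_monoid M\<^esub> y = smult M (tm k) (a \<oplus>\<^bsub>M\<^esub> b)" using ab sm_add[OF tc] by simp
    moreover have "a \<oplus>\<^bsub>M\<^esub> b \<in> carrier M" using ab MG by (simp add: abelian_group.axioms(1) abelian_monoid.a_closed)
    ultimately show "x \<otimes>\<^bsub>add_monoid M\<^esub> y \<in> T k" by (auto simp: tpow_sub_def)
  qed
  show "\<one>\<^bsub>add_monoid M\<^esub> \<in> T k" using T_zero by simp
  show "\<And>x. x \<in> T k \<Longrightarrow> inv\<^bsub>add_monoid M\<^esub> x \<in> T k"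
  proof -
    fix x assume "x \<in> T k"
    then obtain a where a: "a \<in> carrier M" "x = smult M (tm k) a" by (auto simp: tpow_sub_def)
    have "inv\<^bsub>add_monoid M\<^esub> x = smult M (tm k) (\<ominus>\<^bsub>M\<^esub> a)"
      unfolding a_inv_def[symmetric] using a sm_neg[OF tc] by simp
    moreover have "\<ominus>\<^bsub>M\<^esub> a \<in> carrier M" using a MG by (simp add: abelian_group.a_inv_closed)
    ultimately show "inv\<^bsub>add_monoid M\<^esub> x \<in> T k" by (auto simp: tpow_sub_def)
  qed
qed

lemma T_abs: "abelian_subgroup (T k) M"
  by (rule abelian_subgroupI3[OF additive_subgroupI[OF T_sub] MG])

lemma T_mult: "x \<in> T k \<Longrightarrow> smult M (tm i) x \<in> T (k + i)"
  unfolding tpow_sub_def using stt by (auto simp: add.commute)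

lemma T_mono: "T (Suc k) \<subseteq> T k"
proof
  fix x assume "x \<in> T (Suc k)"
  then obtain y where y: "y \<in> carrier M" "x = smult M (tm (Suc k)) y" by (auto simp: tpow_sub_def)
  have "x = smult M (tm k) (smult M (tm 1) y)" using stt[OF y(1), of k 1] y by simp
  moreover have "smult M (tm 1) y \<in> carrier M" using sm_closed tc y by blast
  ultimately show "x \<in> T k" by (auto simp: tpow_sub_def)
qed

lemma T_surj: "x \<in> T (k + i) \<Longrightarrow> \<exists>y \<in> T k. x = smult M (tm i) y"
proof -
  assume "x \<in> T (k + i)"
  then obtain y where y: "y \<in> carrier M" "x = smult M (tm (k + i)) y" by (auto simp: tpow_sub_def)
  have "x = smult M (tm i) (smult M (tm k) y)" using stt[OF y(1), of i k] y by (simp add: add.commute)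
  moreover have "smult M (tm k) y \<in> T k" using y by (auto simp: tpow_sub_def)
  ultimately show ?thesis by blast
qed

lemma poly_cancel:
  assumes p: "p \<in> carrier (UP R)" and q: "q \<in> carrier (UP R)"
    and e: "tm i \<otimes>\<^bsub>UP R\<^esub> p = tm i \<otimes>\<^bsub>UP R\<^esub> q"
  shows "p = q"
proof -
  interpret P: UP_ring R "UP R" by (rule UPR)
  show ?thesis
  proof (rule P.up_eqI)
  show "p \<in> carrier (UP R)" "q \<in> carrier (UP R)" using p q by auto
  fix m
  have "coeff (UP R) p m = coeff (UP R) (tm i \<otimes>\<^bsub>UP R\<^esub> p) (m + i)"
    using P.coeff_monom_mult[ of "\<one>\<^bsub>R\<^esub>" p i m] p R_ring
    by (simp add: P.coeff_closed ring.ring_simprules(6,12))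
  also have "\<dots> = coeff (UP R) (tm i \<otimes>\<^bsub>UP R\<^esub> q) (m + i)" using e by simp
  also have "\<dots> = coeff (UP R) q m"
    using P.coeff_monom_mult[ of "\<one>\<^bsub>R\<^esub>" q i m] q R_ring
    by (simp add: P.coeff_closed ring.ring_simprules(6,12))
  finally show "coeff (UP R) p m = coeff (UP R) q m" .
qed
qed

lemma tinj:
  assumes fg: "fg_projective (UP R) M" and x: "x \<in> carrier M" and y: "y \<in> carrier M"
    and e: "smult M (tm i) x = smult M (tm i) y"
  shows "x = y"
proof -
  obtain K :: nat and m \<sigma> where m: "\<forall>j<K. m j \<in> carrier M"
    and sc: "\<forall>j<K. \<forall>x \<in> carrier M. \<sigma> j x \<in> carrier (UP R)"
    and sl: "\<forall>j<K. \<forall>a \<in> carrier (UP R). \<forall>x \<in> carrier M. \<sigma> j (smult M a x) = a \<otimes>\<^bsub>UP R\<^esub> \<sigma> j x"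
    and rep: "\<forall>x \<in> carrier M. finsum M (\<lambda>j. smult M (\<sigma> j x) (m j)) {..<K} = x"
    using fg unfolding fg_projective_def by blast
  have eq: "\<forall>j<K. \<sigma> j x = \<sigma> j y"
  proof (intro allI impI)
    fix j assume j: "j < K"
    have "tm i \<otimes>\<^bsub>UP R\<^esub> \<sigma> j x = tm i \<otimes>\<^bsub>UP R\<^esub> \<sigma> j y"
      using sl j tc x y e by metis
    thus "\<sigma> j x = \<sigma> j y" using poly_cancel sc j x y by blast
  qed
  have "x = finsum M (\<lambda>j. smult M (\<sigma> j x) (m j)) {..<K}" using rep x by simp
  also have "\<dots> = finsum M (\<lambda>j. smult M (\<sigma> j y) (m j)) {..<K}"
    by (rule abelian_monoid.finsum_cong'[OF abelian_group.axioms(1)[OF MG]])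
       (use eq sc m y sm_closed in auto)
  also have "\<dots> = y" using rep y by simp
  finally show ?thesis .
qed

end



lemma cos_mem: "y \<in> N +>\<^bsub>M\<^esub> x \<longleftrightarrow> (\<exists>h\<in>N. y = h \<oplus>\<^bsub>M\<^esub> x)"
  by (auto simp: a_r_coset_def r_coset_def)

lemma cos_self:
  assumes "abelian_group M" "subgroup N (add_monoid M)" "x \<in> carrier M"
  shows "x \<in> N +>\<^bsub>M\<^esub> x"
proof -
  have "\<zero>\<^bsub>M\<^esub> \<in> N" using subgroup.one_closed[OF assms(2)] by simp
  moreover have "x = \<zero>\<^bsub>M\<^esub> \<oplus>\<^bsub>M\<^esub> x" using assms(1,3)
    by (simp add: abelian_group.axioms(1) abelian_monoid.l_zero)
  ultimately show ?thesis by (auto simp: cos_mem)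
qed

lemma cos_eqD:
  assumes "abelian_group M" "subgroup N (add_monoid M)" "u \<in> carrier M"
    and "N +>\<^bsub>M\<^esub> u = N +>\<^bsub>M\<^esub> v"
  shows "\<exists>h\<in>N. u = h \<oplus>\<^bsub>M\<^esub> v"
  using cos_self[OF assms(1-3)] assms(4) by (simp add: cos_mem)

lemma cos_eqI:
  assumes "abelian_group M" "subgroup N (add_monoid M)" "v \<in> carrier M" "h \<in> N"
    and "u = h \<oplus>\<^bsub>M\<^esub> v"
  shows "N +>\<^bsub>M\<^esub> v = N +>\<^bsub>M\<^esub> u"
  using abelian_group.a_repr_independence[OF assms(1) _ assms(3,2)] assms(4,5)
  by (auto simp: cos_mem)

lemma ind_map:
  assumes M: "abelian_group M" and M': "abelian_group M'"
    and N: "subgroup N (add_monoid M)" and N': "subgroup N' (add_monoid M')"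
    and pc: "\<And>x. x \<in> carrier M \<Longrightarrow> \<phi> x \<in> carrier M'"
    and pa: "\<And>x y. x \<in> carrier M \<Longrightarrow> y \<in> carrier M \<Longrightarrow> \<phi> (x \<oplus>\<^bsub>M\<^esub> y) = \<phi> x \<oplus>\<^bsub>M'\<^esub> \<phi> y"
    and pN: "\<And>h. h \<in> N \<Longrightarrow> \<phi> h \<in> N'"
    and x: "x \<in> carrier M"
  shows "N' +>\<^bsub>M'\<^esub> \<phi> (SOME y. y \<in> N +>\<^bsub>M\<^esub> x) = N' +>\<^bsub>M'\<^esub> \<phi> x"
proof -
  have Nc: "N \<subseteq> carrier M" using subgroup.subset[OF N] by simp
  have "(SOME y. y \<in> N +>\<^bsub>M\<^esub> x) \<in> N +>\<^bsub>M\<^esub> x" by (rule someI, rule cos_self[OF M N x])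
  then obtain h where h: "h \<in> N" "(SOME y. y \<in> N +>\<^bsub>M\<^esub> x) = h \<oplus>\<^bsub>M\<^esub> x" by (auto simp: cos_mem)
  have "\<phi> (SOME y. y \<in> N +>\<^bsub>M\<^esub> x) = \<phi> h \<oplus>\<^bsub>M'\<^esub> \<phi> x" using h pa Nc x by auto
  thus ?thesis using cos_eqI[OF M' N' pc[OF x] pN[OF h(1)]] by simp
qed

lemma FG_carrier: "carrier (FactGroup ((add_monoid M)\<lparr>carrier := X\<rparr>) N) = (\<lambda>a. N +>\<^bsub>M\<^esub> a) ` X"
  by (auto simp: FactGroup_def RCOSETS_def r_coset_def a_r_coset_def)

lemma FG_mult: "C \<otimes>\<^bsub>FactGroup ((add_monoid M)\<lparr>carrier := X\<rparr>) N\<^esub> D = C <+>\<^bsub>M\<^esub> D"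
  by (simp add: FactGroup_def set_mult_def set_add_def)

lemma FG_one: "\<one>\<^bsub>FactGroup ((add_monoid M)\<lparr>carrier := X\<rparr>) N\<^esub> = N"
  by (simp add: FactGroup_def)

lemma monom_UP_eq: "a \<in> carrier R \<Longrightarrow> monom (UP R) a k = (\<lambda>j. if j = k then a else \<zero>\<^bsub>R\<^esub>)"
  by (simp add: UP_def)

locale fam =
  fixes R :: "nat \<Rightarrow> ('r,'x) ring_scheme" and dR sR :: "nat \<Rightarrow> nat \<Rightarrow> 'r \<Rightarrow> 'r"
    and M :: "nat \<Rightarrow> (nat \<Rightarrow> 'r, 'm) module" and d s :: "nat \<Rightarrow> nat \<Rightarrow> 'm \<Rightarrow> 'm"
  assumes SR: "simplicial_ring R dR sR"
    and SM: "simplicial_poly_module R dR sR M d s"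
    and FG: "\<forall>n. fg_projective (UP (R n)) (M n)"
begin

lemma Rr: "ring (R n)" using SR by (simp add: simplicial_ring_def)

lemma SMod: "simplicial_module (\<lambda>n. UP (R n)) (\<lambda>n i. pmap (dR n i)) (\<lambda>n i. pmap (sR n i)) M d s"
  using SM by (simp add: simplicial_poly_module_def)

lemmas SMd = SMod[unfolded simplicial_module_def]
lemmas SMface = SMd[THEN conjunct2, THEN conjunct2, THEN conjunct1, rule_format]
lemmas SMdeg = SMd[THEN conjunct2, THEN conjunct2, THEN conjunct2, rule_format]
lemmas SMops = SMd[THEN conjunct2, THEN conjunct1, unfolded simplicial_ops_def]

lemma LMn: "left_module (UP (R n)) (M n)"
  using SMd[THEN conjunct1] by simp

lemma TM: "tmod (R n) (M n)"
  by (rule tmod.intro[OF Rr LMn])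

abbreviation Tn where "Tn n k \<equiv> tpow_sub (R n) (M n) k"
abbreviation tn where "tn n k \<equiv> monom (UP (R n)) \<one>\<^bsub>R n\<^esub> k"

lemma MGn: "abelian_group (M n)" using tmod.MG[OF TM] .

lemma pm_d: "i \<le> Suc n \<Longrightarrow> pmap (dR n i) (tn (Suc n) k) = tn n k"
proof -
  assume i: "i \<le> Suc n"
  have h: "dR n i \<in> ring_hom (R (Suc n)) (R n)" using SR i by (simp add: simplicial_ring_def)
  show ?thesis
    using ring_hom_one[OF h] ring_hom_zero[OF h Rr Rr] Rr[of n] Rr[of "Suc n"]
    by (simp add: pmap_def monom_UP_eq ring.ring_simprules(6) fun_eq_iff)
qed

lemma pm_s: "i \<le> n \<Longrightarrow> pmap (sR n i) (tn n k) = tn (Suc n) k"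
proof -
  assume i: "i \<le> n"
  have h: "sR n i \<in> ring_hom (R n) (R (Suc n))" using SR i by (simp add: simplicial_ring_def)
  show ?thesis
    using ring_hom_one[OF h] ring_hom_zero[OF h Rr Rr] Rr[of n] Rr[of "Suc n"]
    by (simp add: pmap_def monom_UP_eq ring.ring_simprules(6) fun_eq_iff)
qed

lemma d_c: "i \<le> Suc n \<Longrightarrow> x \<in> carrier (M (Suc n)) \<Longrightarrow> d n i x \<in> carrier (M n)"
  using SMops[THEN conjunct1, rule_format] by simp
lemma s_c: "i \<le> n \<Longrightarrow> x \<in> carrier (M n) \<Longrightarrow> s n i x \<in> carrier (M (Suc n))"
  using SMops[THEN conjunct2, THEN conjunct1, rule_format] by simp
lemma d_add: "i \<le> Suc n \<Longrightarrow> x \<in> carrier (M (Suc n)) \<Longrightarrow> y \<in> carrier (M (Suc n)) \<Longrightarrow>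
   d n i (x \<oplus>\<^bsub>M (Suc n)\<^esub> y) = d n i x \<oplus>\<^bsub>M n\<^esub> d n i y"
  by (simp add: SMface)
lemma s_add: "i \<le> n \<Longrightarrow> x \<in> carrier (M n) \<Longrightarrow> y \<in> carrier (M n) \<Longrightarrow>
   s n i (x \<oplus>\<^bsub>M n\<^esub> y) = s n i x \<oplus>\<^bsub>M (Suc n)\<^esub> s n i y"
  by (simp add: SMdeg)
lemma d_t: "i \<le> Suc n \<Longrightarrow> x \<in> carrier (M (Suc n)) \<Longrightarrow>
   d n i (smult (M (Suc n)) (tn (Suc n) k) x) = smult (M n) (tn n k) (d n i x)"
proof -
  assume i: "i \<le> Suc n" and x: "x \<in> carrier (M (Suc n))"
  have "d n i (smult (M (Suc n)) (tn (Suc n) k) x) = smult (M n) (pmap (dR n i) (tn (Suc n) k)) (d n i x)"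
    using SMface[OF i] x tmod.tc[OF TM] by simp
  thus ?thesis using pm_d[OF i] by simp
qed
lemma s_t: "i \<le> n \<Longrightarrow> x \<in> carrier (M n) \<Longrightarrow>
   s n i (smult (M n) (tn n k) x) = smult (M (Suc n)) (tn (Suc n) k) (s n i x)"
proof -
  assume i: "i \<le> n" and x: "x \<in> carrier (M n)"
  have "s n i (smult (M n) (tn n k) x) = smult (M (Suc n)) (pmap (sR n i) (tn n k)) (s n i x)"
    using SMdeg[OF i] x tmod.tc[OF TM] by simp
  thus ?thesis using pm_s[OF i] by simp
qed

lemma d_T: "i \<le> Suc n \<Longrightarrow> x \<in> Tn (Suc n) k \<Longrightarrow> d n i x \<in> Tn n k"
proof -
  assume i: "i \<le> Suc n" and "x \<in> Tn (Suc n) k"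
  then obtain y where y: "y \<in> carrier (M (Suc n))" "x = smult (M (Suc n)) (tn (Suc n) k) y"
    by (auto simp: tpow_sub_def)
  have "d n i x = smult (M n) (tn n k) (d n i y)" using d_t[OF i y(1)] y(2) by simp
  moreover have "d n i y \<in> carrier (M n)" using d_c[OF i y(1)] .
  ultimately show ?thesis by (auto simp: tpow_sub_def)
qed
lemma s_T: "i \<le> n \<Longrightarrow> x \<in> Tn n k \<Longrightarrow> s n i x \<in> Tn (Suc n) k"
proof -
  assume i: "i \<le> n" and "x \<in> Tn n k"
  then obtain y where y: "y \<in> carrier (M n)" "x = smult (M n) (tn n k) y"
    by (auto simp: tpow_sub_def)
  have "s n i x = smult (M (Suc n)) (tn (Suc n) k) (s n i y)" using s_t[OF i y(1)] y(2) by simp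
  moreover have "s n i y \<in> carrier (M (Suc n))" using s_c[OF i y(1)] .
  ultimately show ?thesis by (auto simp: tpow_sub_def)
qed

lemma Tsub: "subgroup (Tn n k) (add_monoid (M n))" by (rule tmod.T_sub[OF TM])
lemma Tc: "Tn n k \<subseteq> carrier (M n)" by (rule tmod.T_carrier[OF TM])
lemma T0: "\<zero>\<^bsub>M n\<^esub> \<in> Tn n k" by (rule tmod.T_zero[OF TM])
lemma zc: "\<zero>\<^bsub>M n\<^esub> \<in> carrier (M n)" by (rule tmod.zeroM[OF TM])
lemma Tabs: "abelian_subgroup (Tn n k) (M n)" by (rule tmod.T_abs[OF TM])
lemma Tmono: "Tn n (Suc k) \<subseteq> Tn n k" by (rule tmod.T_mono[OF TM])
lemma tcn: "tn n k \<in> carrier (UP (R n))" by (rule tmod.tc[OF TM])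
lemma smc: "x \<in> carrier (M n) \<Longrightarrow> smult (M n) (tn n k) x \<in> carrier (M n)"
  by (rule tmod.sm_closed[OF TM tcn])
lemma sma: "x \<in> carrier (M n) \<Longrightarrow> y \<in> carrier (M n) \<Longrightarrow>
   smult (M n) (tn n k) (x \<oplus>\<^bsub>M n\<^esub> y) = smult (M n) (tn n k) x \<oplus>\<^bsub>M n\<^esub> smult (M n) (tn n k) y"
  by (rule tmod.sm_add[OF TM tcn])
lemma smz: "smult (M n) (tn n k) \<zero>\<^bsub>M n\<^esub> = \<zero>\<^bsub>M n\<^esub>"
  by (rule tmod.sm_zero[OF TM tcn])
lemma cos0: "Tn n k +>\<^bsub>M n\<^esub> \<zero>\<^bsub>M n\<^esub> = Tn n k"
  by (rule abelian_group.a_coset_join2[OF MGn zc Tsub T0])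
lemma d0: "i \<le> Suc n \<Longrightarrow> d n i \<zero>\<^bsub>M (Suc n)\<^esub> = \<zero>\<^bsub>M n\<^esub>"
proof -
  assume i: "i \<le> Suc n"
  have "d n i \<zero>\<^bsub>M (Suc n)\<^esub> = d n i (\<zero>\<^bsub>M (Suc n)\<^esub> \<oplus>\<^bsub>M (Suc n)\<^esub> \<zero>\<^bsub>M (Suc n)\<^esub>)"
    using MGn zc by (simp add: abelian_group.axioms(1) abelian_monoid.l_zero)
  also have "\<dots> = d n i \<zero>\<^bsub>M (Suc n)\<^esub> \<oplus>\<^bsub>M n\<^esub> d n i \<zero>\<^bsub>M (Suc n)\<^esub>"
    using d_add[OF i zc zc] .
  finally show ?thesis using ag_cancel[OF MGn d_c[OF i zc]] by metis
qed

lemma GC: "carrier (grade_level R M q n) = (\<lambda>a. Tn n (Suc q) +>\<^bsub>M n\<^esub> a) ` Tn n q"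
  unfolding grade_level_def by (rule FG_carrier)
lemma GM: "C \<otimes>\<^bsub>grade_level R M q n\<^esub> D = C <+>\<^bsub>M n\<^esub> D"
  unfolding grade_level_def by (rule FG_mult)
lemma G1: "\<one>\<^bsub>grade_level R M q n\<^esub> = Tn n (Suc q)"
  unfolding grade_level_def by (rule FG_one)

lemma fE: "a \<in> carrier (M n) \<Longrightarrow> grade_mult R M p i n (Tn n (Suc p) +>\<^bsub>M n\<^esub> a) =
   Tn n (Suc (p + i)) +>\<^bsub>M n\<^esub> smult (M n) (tn n i) a"
  unfolding grade_mult_def
proof (rule ind_map[OF MGn MGn Tsub Tsub])
  show "\<And>h. h \<in> Tn n (Suc p) \<Longrightarrow> smult (M n) (tn n i) h \<in> Tn n (Suc (p + i))"
    using tmod.T_mult[OF TM] by (metis add_Suc)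
qed (auto simp: smc sma)

lemma dE: "j \<le> Suc n \<Longrightarrow> a \<in> carrier (M (Suc n)) \<Longrightarrow>
   grade_face R M d q n j (Tn (Suc n) (Suc q) +>\<^bsub>M (Suc n)\<^esub> a) = Tn n (Suc q) +>\<^bsub>M n\<^esub> d n j a"
  unfolding grade_face_def
  by (rule ind_map[OF MGn MGn Tsub Tsub]) (auto simp: d_c d_add d_T)

lemma sE: "j \<le> n \<Longrightarrow> a \<in> carrier (M n) \<Longrightarrow>
   grade_degen R M s q n j (Tn n (Suc q) +>\<^bsub>M n\<^esub> a) = Tn (Suc n) (Suc q) +>\<^bsub>M (Suc n)\<^esub> s n j a"
  unfolding grade_degen_def
  by (rule ind_map[OF MGn MGn Tsub Tsub]) (auto simp: s_c s_add s_T)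

lemma rsum: "a \<in> carrier (M n) \<Longrightarrow> b \<in> carrier (M n) \<Longrightarrow>
  (Tn n k +>\<^bsub>M n\<^esub> a) <+>\<^bsub>M n\<^esub> (Tn n k +>\<^bsub>M n\<^esub> b) = Tn n k +>\<^bsub>M n\<^esub> (a \<oplus>\<^bsub>M n\<^esub> b)"
  by (rule abelian_subgroup.a_rcos_sum[OF Tabs])

lemma Tadd: "a \<in> Tn n k \<Longrightarrow> b \<in> Tn n k \<Longrightarrow> a \<oplus>\<^bsub>M n\<^esub> b \<in> Tn n k"
  using subgroup.m_closed[OF Tsub] by fastforce

lemma TinC: "a \<in> Tn n k \<Longrightarrow> a \<in> carrier (M n)" using Tc by blast

lemma main_pos: "mult_equiv_pos R M d s p i"
  unfolding mult_equiv_pos_def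
proof (rule weq_abstract)
  let ?f = "grade_mult R M p i"
  have fE': "\<And>n a. a \<in> Tn n p \<Longrightarrow> ?f n (Tn n (Suc p) +>\<^bsub>M n\<^esub> a) =
     Tn n (Suc (p + i)) +>\<^bsub>M n\<^esub> smult (M n) (tn n i) a" using fE TinC by blast
  have tT: "\<And>n a. a \<in> Tn n p \<Longrightarrow> smult (M n) (tn n i) a \<in> Tn n (p + i)"
    using tmod.T_mult[OF TM] by blast
  show oneG: "\<And>n. \<one>\<^bsub>grade_level R M p n\<^esub> \<in> carrier (grade_level R M p n)"
    unfolding G1 GC using cos0 T0 by (metis image_eqI)
  show fone: "\<And>n. ?f n \<one>\<^bsub>grade_level R M p n\<^esub> = \<one>\<^bsub>grade_level R M (p + i) n\<^esub>"
    unfolding G1 using fE'[OF T0] cos0 smz by metis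
  show "\<And>n. ?f n \<in> hom (grade_level R M p n) (grade_level R M (p + i) n)"
  proof -
    fix n
    show "?f n \<in> hom (grade_level R M p n) (grade_level R M (p + i) n)"
    proof (rule homI)
      fix C assume "C \<in> carrier (grade_level R M p n)"
      then obtain a where a: "a \<in> Tn n p" "C = Tn n (Suc p) +>\<^bsub>M n\<^esub> a" unfolding GC by blast
      show "?f n C \<in> carrier (grade_level R M (p + i) n)"
        unfolding GC using a fE' tT by auto
    next
      fix C D assume "C \<in> carrier (grade_level R M p n)" "D \<in> carrier (grade_level R M p n)"
      then obtain a b where a: "a \<in> Tn n p" "C = Tn n (Suc p) +>\<^bsub>M n\<^esub> a"
        and b: "b \<in> Tn n p" "D = Tn n (Suc p) +>\<^bsub>M n\<^esub> b" unfolding GC by blast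
      have ab: "a \<oplus>\<^bsub>M n\<^esub> b \<in> Tn n p" using Tadd a b by blast
      have "?f n (C \<otimes>\<^bsub>grade_level R M p n\<^esub> D) = ?f n (Tn n (Suc p) +>\<^bsub>M n\<^esub> (a \<oplus>\<^bsub>M n\<^esub> b))"
        unfolding GM a b using rsum TinC a b by simp
      also have "\<dots> = Tn n (Suc (p + i)) +>\<^bsub>M n\<^esub> (smult (M n) (tn n i) a \<oplus>\<^bsub>M n\<^esub> smult (M n) (tn n i) b)"
        using fE'[OF ab] sma TinC a b by simp
      also have "\<dots> = ?f n C \<otimes>\<^bsub>grade_level R M (p + i) n\<^esub> ?f n D"
        unfolding GM a b using fE' a b rsum smc TinC by simp
      finally show "?f n (C \<otimes>\<^bsub>grade_level R M p n\<^esub> D) = ?f n C \<otimes>\<^bsub>grade_level R M (p + i) n\<^esub> ?f n D" .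
    qed
  qed
  show "\<And>n. bij_betw (?f n) (carrier (grade_level R M p n)) (carrier (grade_level R M (p + i) n))"
  proof -
    fix n
    show "bij_betw (?f n) (carrier (grade_level R M p n)) (carrier (grade_level R M (p + i) n))"
    proof (rule bij_betw_imageI)
      show "inj_on (?f n) (carrier (grade_level R M p n))"
      proof (rule inj_onI)
        fix C D assume "C \<in> carrier (grade_level R M p n)" "D \<in> carrier (grade_level R M p n)"
          and e: "?f n C = ?f n D"
        then obtain a b where a: "a \<in> Tn n p" "C = Tn n (Suc p) +>\<^bsub>M n\<^esub> a"
          and b: "b \<in> Tn n p" "D = Tn n (Suc p) +>\<^bsub>M n\<^esub> b" unfolding GC by blast
        have "Tn n (Suc (p + i)) +>\<^bsub>M n\<^esub> smult (M n) (tn n i) a = Tn n (Suc (p + i)) +>\<^bsub>M n\<^esub> smult (M n) (tn n i) b"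
          using e fE' a b by simp
        then obtain h where h: "h \<in> Tn n (Suc (p + i))" "smult (M n) (tn n i) a = h \<oplus>\<^bsub>M n\<^esub> smult (M n) (tn n i) b"
          using cos_eqD[OF MGn Tsub smc[OF TinC[OF a(1)]]] by blast
        have "h \<in> Tn n (Suc p + i)" using h(1) by simp
        then obtain y where y: "y \<in> Tn n (Suc p)" "h = smult (M n) (tn n i) y"
          using tmod.T_surj[OF TM] by blast
        have "smult (M n) (tn n i) a = smult (M n) (tn n i) (y \<oplus>\<^bsub>M n\<^esub> b)"
          using h(2) y sma TinC b by simp
        hence "a = y \<oplus>\<^bsub>M n\<^esub> b"
          using tmod.tinj[OF TM FG[rule_format]] TinC a b y MGn
          by (meson abelian_group.axioms(1) abelian_monoid.a_closed)
        thus "C = D" using cos_eqI[OF MGn Tsub TinC[OF b(1)] y(1)] a b by simp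
      qed
      show "?f n ` carrier (grade_level R M p n) = carrier (grade_level R M (p + i) n)"
      proof
        show "?f n ` carrier (grade_level R M p n) \<subseteq> carrier (grade_level R M (p + i) n)"
          unfolding GC using fE' tT by auto
        show "carrier (grade_level R M (p + i) n) \<subseteq> ?f n ` carrier (grade_level R M p n)"
        proof
          fix C assume "C \<in> carrier (grade_level R M (p + i) n)"
          then obtain c where c: "c \<in> Tn n (p + i)" "C = Tn n (Suc (p + i)) +>\<^bsub>M n\<^esub> c" unfolding GC by blast
          obtain y where y: "y \<in> Tn n p" "c = smult (M n) (tn n i) y" using tmod.T_surj[OF TM c(1)] by blast
          have "C = ?f n (Tn n (Suc p) +>\<^bsub>M n\<^esub> y)" using fE'[OF y(1)] c y by simp
          moreover have "Tn n (Suc p) +>\<^bsub>M n\<^esub> y \<in> carrier (grade_level R M p n)" unfolding GC using y by blast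
          ultimately show "C \<in> ?f n ` carrier (grade_level R M p n)" by blast
        qed
      qed
    qed
  qed
  show "\<And>n j x. j \<le> Suc n \<Longrightarrow> x \<in> carrier (grade_level R M p (Suc n)) \<Longrightarrow>
      grade_face R M d p n j x \<in> carrier (grade_level R M p n)"
  proof -
    fix n j C assume j: "j \<le> Suc n" and "C \<in> carrier (grade_level R M p (Suc n))"
    then obtain a where a: "a \<in> Tn (Suc n) p" "C = Tn (Suc n) (Suc p) +>\<^bsub>M (Suc n)\<^esub> a" unfolding GC by blast
    show "grade_face R M d p n j C \<in> carrier (grade_level R M p n)"
      unfolding GC a(2) dE[OF j TinC[OF a(1)]] using d_T[OF j a(1)] by blast
  qed
  show "\<And>n j. j \<le> Suc n \<Longrightarrow> grade_face R M d (p + i) n j \<one>\<^bsub>grade_level R M (p + i) (Suc n)\<^esub> = \<one>\<^bsub>grade_level R M (p + i) n\<^esub>"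
    unfolding G1 using dE zc d0 cos0 by metis
  show "\<And>n x. x \<in> carrier (grade_level R M (p + i) n) \<Longrightarrow>
     x \<otimes>\<^bsub>grade_level R M (p + i) n\<^esub> \<one>\<^bsub>grade_level R M (p + i) n\<^esub> = x"
  proof -
    fix n C assume "C \<in> carrier (grade_level R M (p + i) n)"
    then obtain a where a: "a \<in> Tn n (p + i)" "C = Tn n (Suc (p + i)) +>\<^bsub>M n\<^esub> a" unfolding GC by blast
    have "C <+>\<^bsub>M n\<^esub> (Tn n (Suc (p + i)) +>\<^bsub>M n\<^esub> \<zero>\<^bsub>M n\<^esub>) = C"
      using rsum[OF TinC[OF a(1)] zc] a MGn TinC by (simp add: abelian_group.axioms(1) abelian_monoid.r_zero)
    thus "C \<otimes>\<^bsub>grade_level R M (p + i) n\<^esub> \<one>\<^bsub>grade_level R M (p + i) n\<^esub> = C"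
      unfolding GM G1 cos0 .
  qed
  show "\<And>n j x. j \<le> Suc n \<Longrightarrow> x \<in> carrier (grade_level R M p (Suc n)) \<Longrightarrow>
     ?f n (grade_face R M d p n j x) = grade_face R M d (p + i) n j (?f (Suc n) x)"
  proof -
    fix n j C assume j: "j \<le> Suc n" and "C \<in> carrier (grade_level R M p (Suc n))"
    then obtain a where a: "a \<in> Tn (Suc n) p" "C = Tn (Suc n) (Suc p) +>\<^bsub>M (Suc n)\<^esub> a" unfolding GC by blast
    have ac: "a \<in> carrier (M (Suc n))" using TinC a by blast
    have "?f n (grade_face R M d p n j C) = Tn n (Suc (p + i)) +>\<^bsub>M n\<^esub> smult (M n) (tn n i) (d n j a)"
      unfolding a(2) dE[OF j ac] using fE' d_T[OF j a(1)] by blast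
    also have "\<dots> = grade_face R M d (p + i) n j (?f (Suc n) C)"
      unfolding a(2) fE'[OF a(1)] dE[OF j smc[OF ac]] d_t[OF j ac] ..
    finally show "?f n (grade_face R M d p n j C) = grade_face R M d (p + i) n j (?f (Suc n) C)" .
  qed
  show "\<And>n j x. j \<le> n \<Longrightarrow> x \<in> carrier (grade_level R M p n) \<Longrightarrow>
     ?f (Suc n) (grade_degen R M s p n j x) = grade_degen R M s (p + i) n j (?f n x)"
  proof -
    fix n j C assume j: "j \<le> n" and "C \<in> carrier (grade_level R M p n)"
    then obtain a where a: "a \<in> Tn n p" "C = Tn n (Suc p) +>\<^bsub>M n\<^esub> a" unfolding GC by blast
    have ac: "a \<in> carrier (M n)" using TinC a by blast
    have "?f (Suc n) (grade_degen R M s p n j C) = Tn (Suc n) (Suc (p + i)) +>\<^bsub>M (Suc n)\<^esub> smult (M (Suc n)) (tn (Suc n) i) (s n j a)"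
      unfolding a(2) sE[OF j ac] using fE' s_T[OF j a(1)] by blast
    also have "\<dots> = grade_degen R M s (p + i) n j (?f n C)"
      unfolding a(2) fE'[OF a(1)] sE[OF j smc[OF ac]] s_t[OF j ac] ..
    finally show "?f (Suc n) (grade_degen R M s p n j C) = grade_degen R M s (p + i) n j (?f n C)" .
  qed
qed

end


theorem proposition5p9:
  fixes R :: "nat \<Rightarrow> 'r ring" and dR sR :: "nat \<Rightarrow> nat \<Rightarrow> 'r \<Rightarrow> 'r"
    and Mp :: "nat \<Rightarrow> (nat \<Rightarrow> 'r, 'm) module" and dMp sMp :: "nat \<Rightarrow> nat \<Rightarrow> 'm \<Rightarrow> 'm"
    and Mm :: "nat \<Rightarrow> (nat \<Rightarrow> 'r, 'n) module" and dMm sMm :: "nat \<Rightarrow> nat \<Rightarrow> 'n \<Rightarrow> 'n"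
  assumes "simplicial_ring R dR sR"
    and "simplicial_poly_module R dR sR Mp dMp sMp"
    and "\<forall>n. fg_projective (UP (R n)) (Mp n)"
    and "simplicial_poly_module R dR sR Mm dMm sMm"
    and "\<forall>n. fg_projective (UP (R n)) (Mm n)"
  shows "(\<forall>(p::nat) (i::nat). mult_equiv_pos R Mp dMp sMp p i) \<and>
         (\<forall>(p::int) (i::nat). p \<le> 0 \<longrightarrow> mult_equiv_neg R Mm dMm sMm p i)"
proof
  show "\<forall>(p::nat) (i::nat). mult_equiv_pos R Mp dMp sMp p i"
    using fam.main_pos[OF fam.intro[OF assms(1,2,3)]] by blast
  show "\<forall>(p::int) (i::nat). p \<le> 0 \<longrightarrow> mult_equiv_neg R Mm dMm sMm p i"
  proof (intro allI impI)
    fix p :: int and i :: nat assume p: "p \<le> 0"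
    have e: "nat (- (p - int i)) = nat (- p) + i" using p by arith
    have "mult_equiv_pos R Mm dMm sMm (nat (- p)) i"
      using fam.main_pos[OF fam.intro[OF assms(1,4,5)]] by blast
    thus "mult_equiv_neg R Mm dMm sMm p i"
      unfolding mult_equiv_neg_def grade_level_neg_def mult_equiv_pos_def e .
  qed
qed

end
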